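(* Let $t$ be an indeterminate. For all integers $n\ge1$ and $l\ge1$, $$\sum_{\substack{\lambda:\ |\lambda|=n,\\ \ell(\lambda)=l}} t^{2n(\lambda)}\frac{(t;t)_l}{(t;t)_{m_1(\lambda)}(t;t)_{m_2(\lambda)}\cdots(t;t)_{m_n(\lambda)}}=t^{l(l-1)}\begin{bmatrix}n-1\\ l-1\end{bmatrix}_t .$$
   Context: For a partition $\lambda$: $|\lambda|=\sum_i\lambda_i$, $\ell(\lambda)$ is the number of nonzero parts, $n(\lambda)=\sum_{i\ge1}(i-1)\lambda_i$, and $m_j(\lambda)=\#\{i:\lambda_i=j\}$. $(x;t)_m=\prod_{i=1}^m(1-xt^{i-1})$, $(x;t)_0=1$, and $\begin{bmatrix} a\\ b\end{bmatrix}_t=\frac{(t;t)_a}{(t;t)_b(t;t)_{a-b}}$ for $0\le b\le a$, $0$ otherwise. *)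

theory Defs
  imports Main "HOL-Computational_Algebra.Polynomial" "HOL-Computational_Algebra.Fraction_Field"
begin

definition tvar :: "rat poly fract" where
  "tvar = Fract [:0, 1:] 1"

definition qpoch :: "'a::field \<Rightarrow> 'a \<Rightarrow> nat \<Rightarrow> 'a" where
  "qpoch x t m = (\<Prod>i<m. 1 - x * t ^ i)"

definition qbinom :: "'a::field \<Rightarrow> nat \<Rightarrow> nat \<Rightarrow> 'a" where
  "qbinom t a b = (if b \<le> a then qpoch t t a / (qpoch t t b * qpoch t t (a - b)) else 0)"

definition partitions :: "nat \<Rightarrow> nat list set" where
  "partitions n = {xs. sorted_wrt (\<ge>) xs \<and> 0 \<notin> set xs \<and> sum_list xs = n}"

text \<open>n(lambda) = sum_i (i-1) lambda_i (1-indexed), i.e. sum_i i * lambda!i 0-indexed.\<close>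
definition nfun :: "nat list \<Rightarrow> nat" where
  "nfun xs = (\<Sum>i<length xs. i * xs ! i)"

definition mult :: "nat \<Rightarrow> nat list \<Rightarrow> nat" where
  "mult j xs = count_list xs j"

end

theory Submission
  imports Defs
begin

lemma qpoch_Suc: "qpoch x t (Suc m) = qpoch x t m * (1 - x * t ^ m)"
  by (simp add: qpoch_def)

lemma qpoch_0[simp]: "qpoch x t 0 = 1"
  by (simp add: qpoch_def)

lemma qbinom_0:
  assumes nz: "\<And>m. qpoch q q m \<noteq> 0"
  shows "qbinom q a 0 = 1"
  using nz[of a] by (simp add: qbinom_def)

lemma qbinom_gt: "a < b \<Longrightarrow> qbinom q a b = 0"
  by (simp add: qbinom_def)

lemma qbinom_diag:
  assumes nz: "\<And>m. qpoch q q m \<noteq> 0"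
  shows "qbinom q a a = 1"
  using nz[of a] by (simp add: qbinom_def)

lemma qbinom_sym:
  "b \<le> a \<Longrightarrow> qbinom q a (a - b) = qbinom q a b"
  by (simp add: qbinom_def mult.commute)

lemma qbinom_pascal:
  fixes q :: "'a::field"
  assumes nz: "\<And>m. qpoch q q m \<noteq> 0"
  shows "qbinom q (Suc a) (Suc b) = qbinom q a b + q ^ (Suc b) * qbinom q a (Suc b)"
proof (cases "b < a")
  case True
  define c where "c = a - Suc b"
  have a: "a = Suc (b + c)" using True c_def by simp
  have ab: "a - b = Suc c" using a by simp
  define x where "x = qpoch q q b"
  define y where "y = qpoch q q c"
  define z where "z = qpoch q q a"
  define u where "u = q ^ Suc b"
  define v where "v = q ^ Suc c"
  have uv: "q * q ^ a = u * v" unfolding u_def v_def a by (simp add: power_add)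
  have x0: "x \<noteq> 0" using nz x_def by auto
  have y0: "y \<noteq> 0" using nz y_def by auto
  have u1: "1 - u \<noteq> 0" using nz[of "Suc b"] unfolding u_def by (simp add: qpoch_Suc)
  have v1: "1 - v \<noteq> 0" using nz[of "Suc c"] unfolding v_def by (simp add: qpoch_Suc)
  have L: "qbinom q (Suc a) (Suc b) = z * (1 - u*v) / (x * (1-u) * (y * (1 - v)))"
    using True unfolding qbinom_def z_def x_def y_def u_def
    by (simp add: qpoch_Suc ab uv[unfolded u_def] v_def)
  have R1: "qbinom q a b = z / (x * (y * (1 - v)))"
    using True unfolding qbinom_def z_def x_def y_def v_def by (simp add: ab qpoch_Suc)
  have R2: "qbinom q a (Suc b) = z / (x * (1-u) * y)"
    using True unfolding qbinom_def z_def x_def y_def u_def by (simp add: c_def qpoch_Suc)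
  show ?thesis unfolding L R1 R2 u_def[symmetric] using x0 y0 u1 v1
    by (simp add: divide_simps) algebra
next
  case False
  then show ?thesis
  proof (cases "b = a")
    case True
    then show ?thesis using qbinom_diag[OF nz] qbinom_gt[of a "Suc a" q] by simp
  next
    case False
    then show ?thesis using \<open>\<not> b < a\<close> by (simp add: qbinom_gt)
  qed
qed

lemma qvander:
  fixes q :: "'a::field"
  assumes nz: "\<And>m. qpoch q q m \<noteq> 0"
  shows "qbinom q (m+N) k = (\<Sum>i\<le>k. qbinom q m (k-i) * qbinom q N i * q^(i*(m+i-k)))"
proof (induction m arbitrary: k)
  case 0
  have "(\<Sum>i\<le>k. qbinom q 0 (k-i) * qbinom q N i * q^(i*(0+i-k)))
      = (\<Sum>i\<le>k. if i = k then qbinom q N i else 0)"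
  proof (rule sum.cong)
    fix i assume "i \<in> {..k}"
    then show "qbinom q 0 (k-i) * qbinom q N i * q^(i*(0+i-k)) = (if i = k then qbinom q N i else 0)"
      by (cases "i = k") (auto simp: qbinom_0[OF nz] qbinom_gt)
  qed simp
  then show ?case by simp
next
  case (Suc m)
  note IH = Suc.IH
  show ?case
  proof (cases k)
    case 0
    then show ?thesis by (simp add: qbinom_0[OF nz])
  next
    case (Suc k')
    note Suc = this
    define T where "T i = qbinom q (Suc m) (k-i) * qbinom q N i * q^(i*(Suc m+i-k))" for i
    define A where "A i = qbinom q m (k'-i) * qbinom q N i * q^(i*(m+i-k'))" for i
    define B where "B i = qbinom q m (k-i) * qbinom q N i * q^(i*(m+i-k))" for i
    have TA: "T i = A i + q^k * B i" if "i \<le> k'" for i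
    proof -
      have e1: "k - i = Suc (k'-i)" using that Suc by simp
      have e2: "Suc m + i - k = m + i - k'" using Suc by simp
      have T1: "T i = A i + q^Suc(k'-i) * qbinom q m (Suc(k'-i)) * qbinom q N i * q^(i*(m+i-k'))"
        unfolding T_def A_def e1 e2 qbinom_pascal[OF nz] by (simp add: distrib_right mult.assoc)
      show ?thesis
      proof (cases "m < Suc (k'-i)")
        case True
        then show ?thesis unfolding T1 B_def e1 by (simp add: qbinom_gt)
      next
        case False
        then have "Suc k' \<le> m + i" using that by arith
        then obtain d where d: "m + i = Suc k' + d" using le_Suc_ex by blast
        have ex: "Suc (k'-i) + i*(m+i-k') = k + i*(m+i-k)"
        proof -
          have "m+i-k' = Suc d" "m+i-k = d" using d Suc by simp_all
          then show ?thesis using that Suc by simp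
        qed
        have "q^Suc(k'-i) * q^(i*(m+i-k')) = q^k * q^(i*(m+i-k))"
          by (simp only: power_add[symmetric] ex)
        moreover have "q^Suc(k'-i) * qbinom q m (Suc(k'-i)) * qbinom q N i * q^(i*(m+i-k'))
           = (q^Suc(k'-i) * q^(i*(m+i-k'))) * (qbinom q m (Suc(k'-i)) * qbinom q N i)"
          by (simp add: mult_ac)
        ultimately show ?thesis unfolding T1 B_def e1 by (simp add: mult_ac)
      qed
    qed
    have TB: "T k = q^k * B k"
      unfolding T_def B_def by (simp add: qbinom_0[OF nz] power_add mult_ac)
    have "qbinom q (Suc m + N) k = qbinom q (m+N) k' + q^k * qbinom q (m+N) k"
      using Suc qbinom_pascal[OF nz, of "m+N" k'] by simp
    also have "\<dots> = (\<Sum>i\<le>k'. A i) + q^k * ((\<Sum>i\<le>k'. B i) + B k)"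
      unfolding A_def B_def IH Suc by simp
    also have "\<dots> = (\<Sum>i\<le>k'. T i) + T k"
    proof -
      have "(\<Sum>i\<le>k'. T i) = (\<Sum>i\<le>k'. A i + q^k * B i)"
        using TA by (intro sum.cong) auto
      also have "\<dots> = (\<Sum>i\<le>k'. A i) + q^k * (\<Sum>i\<le>k'. B i)"
        by (simp add: sum.distrib sum_distrib_left)
      finally show ?thesis using TB by (simp add: ring_distribs)
    qed
    also have "\<dots> = (\<Sum>i\<le>k. T i)" using Suc by simp
    finally show ?thesis unfolding T_def .
  qed
qed

lemma length_le_sum_list: "0 \<notin> set (xs::nat list) \<Longrightarrow> length xs \<le> sum_list xs"
  by (induction xs) auto

lemma partitions_length: "lam \<in> partitions n \<Longrightarrow> length lam \<le> n"
  unfolding partitions_def using length_le_sum_list by auto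

lemma partitions_elem: "lam \<in> partitions n \<Longrightarrow> x \<in> set lam \<Longrightarrow> x \<le> n"
  unfolding partitions_def using member_le_sum_list by fastforce

lemma finite_partitions: "finite (partitions n)"
proof -
  have "partitions n \<subseteq> {xs. set xs \<subseteq> {0..n} \<and> length xs \<le> n}"
    using partitions_length partitions_elem by fastforce
  moreover have "finite {xs. set xs \<subseteq> {0..n} \<and> length xs \<le> n}"
    by (rule finite_lists_length_le) simp
  ultimately show ?thesis by (rule finite_subset)
qed

lemma decomp:
  "sorted_wrt (\<ge>) (xs::nat list) \<Longrightarrow> 0 \<notin> set xs \<Longrightarrow>
   xs = filter (\<lambda>x. 1 < x) xs @ replicate (length xs - length (filter (\<lambda>x. 1 < x) xs)) 1"
proof (induction xs)
  case Nil
  then show ?case by simp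
next
  case (Cons x xs)
  then have IH: "xs = filter (\<lambda>x. 1 < x) xs @ replicate (length xs - length (filter (\<lambda>x. 1 < x) xs)) 1"
    by simp
  show ?case
  proof (cases "1 < x")
    case True
    have "length (filter (\<lambda>x. 1 < x) xs) \<le> length xs" by (rule length_filter_le)
    then show ?thesis using True IH by (simp add: Suc_diff_le)
  next
    case False
    then have x1: "x = 1" using Cons.prems by (cases x) auto
    have all1: "\<forall>y\<in>set xs. y = 1"
    proof
      fix y assume y: "y \<in> set xs"
      then have "y \<le> 1" using Cons.prems(1) x1 by auto
      moreover have "y \<noteq> 0"
      proof
        assume "y = 0" then show False using y Cons.prems(2) by simp
      qed
      ultimately show "y = 1" by simp
    qed
    then have "filter (\<lambda>x. 1 < x) xs = []" by (auto simp: filter_empty_conv)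
    moreover have "xs = replicate (length xs) 1" using all1 by (simp add: replicate_length_same)
    ultimately show ?thesis using x1 by simp
  qed
qed

lemma sum_list_g: "sum_list (map Suc mu @ replicate k (1::nat)) = sum_list mu + length mu + k"
  by (induction mu) (auto simp: sum_list_replicate)

lemma count_map_Suc: "count_list (map Suc mu) (Suc i) = count_list mu i"
  by (induction mu) auto

lemma count_map_Suc_1: "0 \<notin> set mu \<Longrightarrow> count_list (map Suc mu) (Suc 0) = 0"
  by (induction mu) auto

lemma count_rep: "count_list (replicate k x) y = (if x = y then k else 0)"
  by (induction k) auto

lemma two_gauss: "2 * (\<Sum>i<l. i) = l * (l - (1::nat))"
proof (induction l)
  case (Suc l)
  have "2 * (\<Sum>i<Suc l. i) = l * (l - 1) + 2 * l" using Suc by simp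
  also have "\<dots> = Suc l * (Suc l - 1)" by (cases l) simp_all
  finally show ?case .
qed simp

lemma nfun_g: "nfun (map Suc mu @ replicate k 1) = nfun mu + (\<Sum>i<length mu + k. i)"
proof -
  let ?g = "map Suc mu @ replicate k 1"
  have "nfun ?g = (\<Sum>i<length mu + k. i * ?g ! i)" by (simp add: nfun_def)
  also have "\<dots> = (\<Sum>i<length mu + k. i + (if i < length mu then i * mu ! i else 0))"
    by (intro sum.cong) (auto simp: nth_append)
  also have "\<dots> = (\<Sum>i<length mu + k. i) + (\<Sum>i<length mu + k. if i < length mu then i * mu ! i else 0)"
    by (simp add: sum.distrib)
  also have "(\<Sum>i<length mu + k. if i < length mu then i * mu ! i else 0)
           = (\<Sum>i\<in>{i\<in>{..<length mu + k}. i < length mu}. i * mu ! i)"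
    by (rule sum.inter_filter[symmetric]) simp
  also have "{i\<in>{..<length mu + k}. i < length mu} = {..<length mu}" by auto
  finally show ?thesis by (simp add: nfun_def)
qed

lemma prod_g:
  fixes q :: "'a::field"
  assumes mu: "0 \<notin> set mu" "\<forall>x\<in>set mu. x \<le> M" and l: "1 \<le> l" and n: "n = M + l"
  shows "(\<Prod>i\<in>{1..n}. qpoch q q (mult i (map Suc mu @ replicate k 1)))
       = qpoch q q k * (\<Prod>i\<in>{1..M}. qpoch q q (mult i mu))"
proof -
  let ?g = "map Suc mu @ replicate k 1"
  have n1: "n = Suc (n - 1)" "1 \<le> n" using n l by auto
  have "(\<Prod>i\<in>{1..n}. qpoch q q (mult i ?g)) = qpoch q q (mult 1 ?g) * (\<Prod>i\<in>{Suc 1..n}. qpoch q q (mult i ?g))"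
    using n1(2) by (rule prod.atLeast_Suc_atMost)
  also have "mult 1 ?g = k" using mu by (simp add: mult_def count_map_Suc_1 count_rep)
  also have "(\<Prod>i\<in>{Suc 1..n}. qpoch q q (mult i ?g)) = (\<Prod>i\<in>{1..n-1}. qpoch q q (mult (Suc i) ?g))"
    using prod.shift_bounds_cl_Suc_ivl[of "\<lambda>i. qpoch q q (mult i ?g)" 1 "n-1"] n1(1) by simp
  also have "\<dots> = (\<Prod>i\<in>{1..n-1}. qpoch q q (mult i mu))"
    by (intro prod.cong) (auto simp: mult_def count_map_Suc count_rep)
  also have "\<dots> = (\<Prod>i\<in>{1..M}. qpoch q q (mult i mu))"
  proof (rule prod.mono_neutral_right)
    show "{1..M} \<subseteq> {1..n-1}" using n l by auto
    show "\<forall>i\<in>{1..n - 1} - {1..M}. qpoch q q (mult i mu) = 1"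
    proof
      fix i assume "i \<in> {1..n - 1} - {1..M}"
      then have "i \<notin> set mu" using mu(2) by auto
      then show "qpoch q q (mult i mu) = 1" by (simp add: mult_def)
    qed
  qed simp
  finally show ?thesis .
qed

definition Sf :: "'a::field \<Rightarrow> nat \<Rightarrow> nat \<Rightarrow> 'a" where
  "Sf q n l = (\<Sum>lam\<in>{lam \<in> partitions n. length lam = l}.
            q ^ (2 * nfun lam) * qpoch q q l / (\<Prod>j\<in>{1..n}. qpoch q q (mult j lam)))"

lemma fw_in:
  assumes "mu \<in> partitions M" "length mu = j" "j \<le> l"
  shows "map Suc mu @ replicate (l-j) 1 \<in> {lam \<in> partitions (M + l). length lam = l}"
proof -
  have s: "sorted_wrt (\<ge>) mu" "0 \<notin> set mu" "sum_list mu = M" using assms(1) by (auto simp: partitions_def)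
  have r: "sorted_wrt (\<ge>) (replicate k (1::nat))" for k by (induction k) auto
  have "sorted_wrt (\<ge>) (map Suc mu)" using s(1) by (simp add: sorted_wrt_map)
  then have "sorted_wrt (\<ge>) (map Suc mu @ replicate (l-j) (1::nat))"
    using r by (auto simp: sorted_wrt_append)
  moreover have "0 \<notin> set (map Suc mu @ replicate (l-j) (1::nat))" by auto
  moreover have "sum_list (map Suc mu @ replicate (l-j) (1::nat)) = M + l"
    unfolding sum_list_g using s(3) assms(2,3) by simp
  ultimately show ?thesis using assms(2,3) by (simp add: partitions_def)
qed

lemma bw_fw:
  assumes "0 \<notin> set mu"
  shows "filter (\<lambda>x. 1 < x) (map Suc mu @ replicate k (1::nat)) = map Suc mu"
proof -
  have "filter (\<lambda>x. 1 < x) (map Suc mu) = map Suc mu" using assms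
    by (induction mu) auto
  moreover have "filter (\<lambda>x. 1 < x) (replicate k (1::nat)) = []" by (induction k) auto
  ultimately show ?thesis by simp
qed

lemma term_eq:
  fixes q :: "'a::field"
  assumes nz: "\<And>m. qpoch q q m \<noteq> 0"
    and mu: "mu \<in> partitions M" "length mu = j" "j \<le> l" and l: "1 \<le> l" and n: "n = M + l"
  shows "q ^ (2 * nfun (map Suc mu @ replicate (l-j) 1)) * qpoch q q l
          / (\<Prod>i\<in>{1..n}. qpoch q q (mult i (map Suc mu @ replicate (l-j) 1)))
       = q^(l*(l-1)) * (qbinom q l j * (q ^ (2 * nfun mu) * qpoch q q j
          / (\<Prod>i\<in>{1..M}. qpoch q q (mult i mu))))"
proof -
  have m0: "0 \<notin> set mu" "\<forall>x\<in>set mu. x \<le> M"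
    using mu(1) partitions_elem[OF mu(1)] by (auto simp: partitions_def)
  define P where "P = (\<Prod>i\<in>{1..M}. qpoch q q (mult i mu))"
  have P0: "P \<noteq> 0" unfolding P_def using nz by (simp add: prod_zero_iff)
  have e1: "2 * nfun (map Suc mu @ replicate (l-j) 1) = 2 * nfun mu + l*(l-1)"
    using nfun_g[of mu "l-j"] two_gauss[of l] mu(2,3) by simp
  have e2: "(\<Prod>i\<in>{1..n}. qpoch q q (mult i (map Suc mu @ replicate (l-j) 1))) = qpoch q q (l-j) * P"
    unfolding P_def using prod_g[OF m0 l n] .
  have e3: "qbinom q l j = qpoch q q l / (qpoch q q j * qpoch q q (l-j))"
    using mu(3) by (simp add: qbinom_def)
  show ?thesis unfolding e1 e2 e3 P_def[symmetric] using P0 nz[of j] nz[of "l-j"]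
    by (simp add: power_add field_simps)
qed

lemma column:
  fixes q :: "'a::field"
  assumes nz: "\<And>m. qpoch q q m \<noteq> 0" and l: "1 \<le> l" "l \<le> n"
  shows "Sf q n l = q^(l*(l-1)) * (\<Sum>j\<le>l. qbinom q l j * Sf q (n-l) j)"
proof -
  define M where "M = n - l"
  have n: "n = M + l" using l M_def by simp
  define A where "A = {lam \<in> partitions n. length lam = l}"
  define B where "B = (SIGMA j:{..l}. {mu \<in> partitions M. length mu = j})"
  define fw where "fw = (\<lambda>(j::nat, mu::nat list). map Suc mu @ replicate (l-j) (1::nat))"
  define bw where "bw = (\<lambda>lam::nat list. (length (filter (\<lambda>x. 1 < x) lam), map (\<lambda>x. x - 1) (filter (\<lambda>x. 1 < x) lam)))"
  define tm where "tm = (\<lambda>lam. q ^ (2 * nfun lam) * qpoch q q l / (\<Prod>j\<in>{1..n}. qpoch q q (mult j lam)))"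
  define tm' where "tm' = (\<lambda>j mu. q ^ (2 * nfun mu) * qpoch q q j / (\<Prod>i\<in>{1..M}. qpoch q q (mult i mu)))"
  have fwbw: "fw (bw lam) = lam" if "lam \<in> A" for lam
  proof -
    have p: "sorted_wrt (\<ge>) lam" "0 \<notin> set lam" "length lam = l" using that by (auto simp: A_def partitions_def)
    have "map Suc (map (\<lambda>x. x - 1) (filter (\<lambda>x. 1 < x) lam)) = filter (\<lambda>x. 1 < x) lam"
      by (induction lam) auto
    then show ?thesis using decomp[OF p(1,2)] p(3) by (simp add: fw_def bw_def)
  qed
  have bwfw: "bw (fw a) = a" if aB: "a \<in> B" for a
  proof -
    obtain j mu where a: "a = (j, mu)" "j \<le> l" "mu \<in> partitions M" "length mu = j"
      using aB unfolding B_def by blast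
    have "0 \<notin> set mu" using a(3) by (simp add: partitions_def)
    then have "filter (\<lambda>x. 1 < x) (fw a) = map Suc mu" unfolding fw_def a(1) prod.case by (rule bw_fw)
    then show ?thesis using a by (simp add: bw_def comp_def)
  qed
  have fwin: "fw a \<in> A" if "a \<in> B" for a
    using that fw_in n by (auto simp: A_def B_def fw_def)
  have bwin: "bw lam \<in> B" if "lam \<in> A" for lam
  proof -
    have f: "fw (bw lam) = lam" using fwbw[OF that] .
    have p: "sorted_wrt (\<ge>) lam" "0 \<notin> set lam" "length lam = l" "sum_list lam = n"
      using that by (auto simp: A_def partitions_def)
    define mu where "mu = map (\<lambda>x. x - 1) (filter (\<lambda>x. 1 < x) lam)"
    define j where "j = length (filter (\<lambda>x. 1 < x) lam)"
    have bwe: "bw lam = (j, mu)" by (simp add: bw_def j_def mu_def)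
    have jl: "j \<le> l" using p(3) length_filter_le[of _ lam] by (simp add: j_def)
    have lm: "length mu = j" by (simp add: mu_def j_def)
    have s1: "sorted_wrt (\<ge>) mu" unfolding mu_def sorted_wrt_map
      by (rule sorted_wrt_mono_rel[OF _ sorted_wrt_filter[OF p(1)]]) auto
    have s2: "0 \<notin> set mu" by (auto simp: mu_def)
    have "lam = map Suc mu @ replicate (l-j) 1" using f bwe by (simp add: fw_def)
    then have "sum_list lam = sum_list mu + length mu + (l - j)" using sum_list_g by metis
    then have s3: "sum_list mu = M" using p(4) lm jl n by simp
    show ?thesis using bwe jl lm s1 s2 s3 by (simp add: B_def partitions_def)
  qed
  have "Sf q n l = sum tm A" by (simp add: Sf_def tm_def A_def)
  also have "\<dots> = sum (tm \<circ> fw) B"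
    by (rule sym, rule sum.reindex_bij_witness[where i=bw and j=fw])
       (use fwbw bwfw fwin bwin in auto)
  also have "\<dots> = (\<Sum>j\<le>l. \<Sum>mu\<in>{mu \<in> partitions M. length mu = j}. tm (fw (j, mu)))"
    unfolding B_def by (subst sum.Sigma) (auto simp: finite_partitions split_def comp_def)
  also have "\<dots> = (\<Sum>j\<le>l. \<Sum>mu\<in>{mu \<in> partitions M. length mu = j}. q^(l*(l-1)) * (qbinom q l j * tm' j mu))"
  proof (intro sum.cong refl)
    fix j mu assume "j \<in> {..l}" "mu \<in> {mu \<in> partitions M. length mu = j}"
    then show "tm (fw (j,mu)) = q^(l*(l-1)) * (qbinom q l j * tm' j mu)"
      unfolding tm_def tm'_def fw_def prod.case by (intro term_eq[OF nz _ _ _ l(1) n]) auto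
  qed
  also have "\<dots> = q^(l*(l-1)) * (\<Sum>j\<le>l. qbinom q l j * Sf q M j)"
    by (simp add: sum_distrib_left Sf_def tm'_def M_def)
  finally show ?thesis by (simp add: M_def)
qed

lemma Sf_gt: "n < l \<Longrightarrow> Sf q n l = 0"
proof -
  assume "n < l"
  then have e: "{lam \<in> partitions n. length lam = l} = {}" using partitions_length by fastforce
  show ?thesis unfolding Sf_def e by simp
qed

lemma Sf_M_0: "1 \<le> M \<Longrightarrow> Sf q M 0 = 0"
proof -
  assume "1 \<le> M"
  then have e: "{lam \<in> partitions M. length lam = 0} = {}" by (auto simp: partitions_def)
  show ?thesis unfolding Sf_def e by simp
qed

lemma Sf_0_0: "Sf q 0 0 = 1"
proof -
  have "{lam \<in> partitions 0. length lam = 0} = {[]}" by (auto simp: partitions_def)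
  then show ?thesis by (simp add: Sf_def nfun_def)
qed

lemma Sf_formula:
  fixes q :: "'a::field"
  assumes nz: "\<And>m. qpoch q q m \<noteq> 0"
  shows "1 \<le> n \<Longrightarrow> 1 \<le> l \<Longrightarrow> Sf q n l = q^(l*(l-1)) * qbinom q (n-1) (l-1)"
proof (induction n arbitrary: l rule: less_induct)
  case (less n)
  show ?case
  proof (cases "n < l")
    case True
    then show ?thesis using less.prems by (simp add: Sf_gt qbinom_gt)
  next
    case False
    define M where "M = n - l"
    have col: "Sf q n l = q^(l*(l-1)) * (\<Sum>j\<le>l. qbinom q l j * Sf q M j)"
      unfolding M_def using column[OF nz less.prems(2)] False by simp
    show ?thesis
    proof (cases "M = 0")
      case True
      have "(\<Sum>j\<le>l. qbinom q l j * Sf q M j) = (\<Sum>j\<le>l. if j = 0 then 1 else 0)"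
        using True by (intro sum.cong) (auto simp: Sf_0_0 Sf_gt qbinom_0[OF nz])
      also have "\<dots> = 1" by simp
      finally show ?thesis using col True False M_def qbinom_diag[OF nz, of "l-1"]
        by (simp add: M_def)
    next
      case M: False
      obtain L where L: "l = Suc L" using less.prems(2) by (cases l) auto
      have Mn: "M < n" "1 \<le> M" using M less.prems M_def False by auto
      have "(\<Sum>j\<le>l. qbinom q l j * Sf q M j)
          = qbinom q l 0 * Sf q M 0 + (\<Sum>i\<le>L. qbinom q l (Suc i) * Sf q M (Suc i))"
        unfolding L by (rule sum.atMost_Suc_shift)
      also have "\<dots> = (\<Sum>i\<le>L. qbinom q (Suc L) (L - i) * qbinom q (M-1) i * q^(i*(Suc L + i - L)))"
      proof -
        have "qbinom q l (Suc i) * Sf q M (Suc i) =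
              qbinom q (Suc L) (L - i) * qbinom q (M-1) i * q^(i*(Suc L + i - L))" if "i \<le> L" for i
        proof -
          have "Sf q M (Suc i) = q^(Suc i * i) * qbinom q (M-1) i"
            using less.IH[OF Mn(1) Mn(2), of "Suc i"] by simp
          moreover have "qbinom q (Suc L) (L - i) = qbinom q (Suc L) (Suc i)"
            using qbinom_sym[of "Suc i" "Suc L" q] that by simp
          moreover have "Suc L + i - L = Suc i" using that by simp
          ultimately show ?thesis unfolding L by (simp add: mult_ac)
        qed
        then show ?thesis using Sf_M_0[OF Mn(2)] by (auto intro: sum.cong)
      qed
      also have "\<dots> = qbinom q (Suc L + (M-1)) L" by (rule qvander[OF nz, symmetric])
      finally have sm: "(\<Sum>j\<le>l. qbinom q l j * Sf q M j) = qbinom q (Suc L + (M-1)) L" .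
      have "Suc L + (M-1) = n - 1" "L = l - 1" using Mn M_def False L by auto
      then show ?thesis using col sm by simp
    qed
  qed
qed

lemma tvar_pow: "tvar ^ k = Fract ([:0,1:] ^ k) 1"
  by (induction k) (simp_all add: tvar_def One_fract_def)

lemma qpoch_tvar_nz: "qpoch tvar tvar m \<noteq> 0"
proof -
  have "1 - tvar * tvar ^ i \<noteq> 0" for i
  proof
    assume "1 - tvar * tvar ^ i = 0"
    then have "tvar ^ Suc i = 1" by simp
    then have "Fract ([:0,1:] ^ Suc i) 1 = Fract 1 (1::rat poly)" unfolding tvar_pow One_fract_def .
    then have "[:0,1:] ^ Suc i = (1::rat poly)" by (simp add: eq_fract)
    then have "degree ([:0,1::rat:] ^ Suc i) = 0" by simp
    moreover have "degree ([:0,1::rat:] ^ Suc i) = Suc i" by (simp add: degree_power_eq)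
    ultimately show False by simp
  qed
  then show ?thesis by (simp add: qpoch_def)
qed

theorem mainTheorem9:
  fixes n l :: nat
  assumes "n \<ge> 1" and "l \<ge> 1"
  shows "(\<Sum>lam\<in>{lam \<in> partitions n. length lam = l}.
            tvar ^ (2 * nfun lam) * qpoch tvar tvar l
              / (\<Prod>j\<in>{1..n}. qpoch tvar tvar (mult j lam)))
         = tvar ^ (l * (l - 1)) * qbinom tvar (n - 1) (l - 1)"
  using Sf_formula[OF qpoch_tvar_nz assms] unfolding Sf_def .

end
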